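(* Let $N=N_A+N_B$ qubits be partitioned into $A$ ($N_A$ qubits) and $B$ ($N_B$ qubits), let $Q_0\in\{0,\dots,N\}$ and $k\ge1$. If $|\Phi\rangle$ is Haar-random in the charge-$Q_0$ sector $\mathcal{H}_{Q_0}$ of $AB$, and $|\tilde\psi_z\rangle={}_B\langle z|\Phi\rangle$ for computational-basis outcomes $z\in\{0,1\}^{N_B}$, then $$\mathbb{E}_{\Phi}\left[\sum_{z}\frac{(|\tilde\psi_z\rangle\langle\tilde\psi_z|)^{\otimes k}}{\langle\tilde\psi_z|\tilde\psi_z\rangle^{k-1}}\right]=\bigoplus_{Q_A=0}^{N_A}\pi(Q_A|Q_0)\,\rho^{(k)}_{\mathrm{Haar},A,Q_A}.$$ Moreover, for each bath string $z$ of Hamming weight $Q_B$, $\mathbb{E}_\Phi[p(z)]=\binom{N_A}{Q_0-Q_B}/\binom{N}{Q_0}$ where $p(z)=\langle\tilde\psi_z|\tilde\psi_z\rangle$.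
   Context: Charge of a computational basis string is its Hamming weight; the charge-$Q$ sector of $n$ qubits is spanned by strings of weight $Q$ and has dimension $\binom{n}{Q}$. Terms with $\langle\tilde\psi_z|\tilde\psi_z\rangle=0$ are omitted from the sum. $\rho^{(k)}_{\mathrm{Haar},A,Q_A}=\mathbb{E}_\phi(|\phi\rangle\langle\phi|)^{\otimes k}$ with $|\phi\rangle$ Haar-random in the charge-$Q_A$ sector of $A$. $\pi(Q_A|Q_0)=\binom{N_A}{Q_A}\binom{N_B}{Q_0-Q_A}/\binom{N}{Q_0}$, with $\binom{n}{m}=0$ for $m\notin\{0,\dots,n\}$. *)

theory Defs
  imports "HOL-Probability.Probability"
begin

definition bitstrings :: "nat \<Rightarrow> bool list set" where
  "bitstrings n = {xs. length xs = n}"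

text \<open>Charge = Hamming weight.\<close>
definition hw :: "bool list \<Rightarrow> nat" where
  "hw xs = length (filter id xs)"

text \<open>State vectors of n qubits: amplitude functions on bitstrings (extensional), with
  the product Borel sigma algebra.\<close>
definition state_space :: "nat \<Rightarrow> (bool list \<Rightarrow> complex) measure" where
  "state_space n = PiM (bitstrings n) (\<lambda>_. borel)"

definition charge_sphere :: "nat \<Rightarrow> nat \<Rightarrow> (bool list \<Rightarrow> complex) set" where
  "charge_sphere n Q = {\<phi> \<in> space (state_space n).
      (\<forall>x\<in>bitstrings n. hw x \<noteq> Q \<longrightarrow> \<phi> x = 0) \<and>
      (\<Sum>x\<in>bitstrings n. (cmod (\<phi> x))^2) = 1}"

definition charge_unitary :: "nat \<Rightarrow> (bool list \<Rightarrow> bool list \<Rightarrow> complex) \<Rightarrow> bool" where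
  "charge_unitary n U \<longleftrightarrow>
     (\<forall>x\<in>bitstrings n. \<forall>y\<in>bitstrings n. hw x \<noteq> hw y \<longrightarrow> U x y = 0) \<and>
     (\<forall>x\<in>bitstrings n. \<forall>x'\<in>bitstrings n.
        (\<Sum>y\<in>bitstrings n. cnj (U y x) * U y x') = (if x = x' then 1 else 0))"

definition apply_op :: "nat \<Rightarrow> (bool list \<Rightarrow> bool list \<Rightarrow> complex) \<Rightarrow> (bool list \<Rightarrow> complex) \<Rightarrow> (bool list \<Rightarrow> complex)" where
  "apply_op n U \<phi> = (\<lambda>x\<in>bitstrings n. \<Sum>y\<in>bitstrings n. U x y * \<phi> y)"

definition haar_sector :: "nat \<Rightarrow> nat \<Rightarrow> (bool list \<Rightarrow> complex) measure \<Rightarrow> bool" where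
  "haar_sector n Q M \<longleftrightarrow> prob_space M \<and> sets M = sets (state_space n) \<and>
     (AE \<phi> in M. \<phi> \<in> charge_sphere n Q) \<and>
     (\<forall>U. charge_unitary n U \<longrightarrow> distr M M (apply_op n U) = M)"

text \<open>Matrix entry ((xs),(ys)) of (|psi><psi|)^{\<otimes>k}; xs, ys are k-tuples of basis strings.\<close>
definition tensor_proj :: "nat \<Rightarrow> (bool list \<Rightarrow> complex) \<Rightarrow> bool list list \<Rightarrow> bool list list \<Rightarrow> complex" where
  "tensor_proj k \<psi> xs ys = (\<Prod>i<k. \<psi> (xs ! i) * cnj (\<psi> (ys ! i)))"

definition haar_moment :: "nat \<Rightarrow> (bool list \<Rightarrow> complex) measure \<Rightarrow> bool list list \<Rightarrow> bool list list \<Rightarrow> complex" where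
  "haar_moment k M xs ys = (LINT \<phi>|M. tensor_proj k \<phi> xs ys)"

text \<open>Unnormalized post-measurement state on A: psi_z(a) = Phi(a z) (A qubits first).\<close>
definition post_state :: "(bool list \<Rightarrow> complex) \<Rightarrow> bool list \<Rightarrow> (bool list \<Rightarrow> complex)" where
  "post_state \<Phi> z = (\<lambda>a. \<Phi> (a @ z))"

definition outcome_prob :: "nat \<Rightarrow> (bool list \<Rightarrow> complex) \<Rightarrow> bool list \<Rightarrow> real" where
  "outcome_prob NA \<Phi> z = (\<Sum>a\<in>bitstrings NA. (cmod (\<Phi> (a @ z)))^2)"

text \<open>Entry of sum_z (|psi_z><psi_z|)^{\<otimes>k} / <psi_z|psi_z>^(k-1), omitting zero-norm terms.\<close>
definition meas_sum :: "nat \<Rightarrow> nat \<Rightarrow> nat \<Rightarrow> (bool list \<Rightarrow> complex) \<Rightarrow> bool list list \<Rightarrow> bool list list \<Rightarrow> complex" where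
  "meas_sum NA NB k \<Phi> xs ys =
     (\<Sum>z\<in>{z\<in>bitstrings NB. outcome_prob NA \<Phi> z \<noteq> 0}.
        tensor_proj k (post_state \<Phi> z) xs ys / (complex_of_real (outcome_prob NA \<Phi> z)) ^ (k - 1))"

text \<open>pi(Q_A | Q_0), with binomials vanishing outside range.\<close>
definition cond_pi :: "nat \<Rightarrow> nat \<Rightarrow> nat \<Rightarrow> nat \<Rightarrow> real" where
  "cond_pi NA NB Q0 QA =
     (if QA \<le> Q0 then real (NA choose QA) * real (NB choose (Q0 - QA)) / real ((NA + NB) choose Q0)
      else 0)"

end

theory Submission
  imports Defs
begin

lemma finite_bitstrings[simp]: "finite (bitstrings n)"
proof -
  have "bitstrings n = {xs. set xs \<subseteq> UNIV \<and> length xs = n}" by (auto simp: bitstrings_def)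
  then show ?thesis using finite_lists_length_eq[of "UNIV::bool set" n] by simp
qed

lemma hw_append[simp]: "hw (a @ z) = hw a + hw z" by (simp add: hw_def)
lemma hw_Cons[simp]: "hw (b # xs) = (if b then Suc (hw xs) else hw xs)" by (simp add: hw_def)
lemma hw_Nil[simp]: "hw [] = 0" by (simp add: hw_def)
lemma hw_le: "x \<in> bitstrings n \<Longrightarrow> hw x \<le> n"
  by (auto simp: hw_def bitstrings_def length_filter_le)

lemma bitstrings_Suc: "bitstrings (Suc n) = (Cons True) ` bitstrings n \<union> (Cons False) ` bitstrings n"
proof (rule set_eqI)
  fix x :: "bool list"
  show "x \<in> bitstrings (Suc n) \<longleftrightarrow> x \<in> (Cons True) ` bitstrings n \<union> (Cons False) ` bitstrings n"
    by (cases x; cases "hd x") (auto simp: bitstrings_def)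
qed

lemma card_hw: "card {x \<in> bitstrings n. hw x = q} = n choose q"
proof (induction n arbitrary: q)
  case 0
  have "{x \<in> bitstrings 0. hw x = q} = (if q = 0 then {[]} else {})" by (auto simp: bitstrings_def)
  then show ?case by simp
next
  case (Suc n)
  have e: "{x \<in> bitstrings (Suc n). hw x = q} =
     (Cons True) ` {x \<in> bitstrings n. Suc (hw x) = q} \<union> (Cons False) ` {x \<in> bitstrings n. hw x = q}"
    by (auto simp: bitstrings_Suc)
  have c: "card ({x \<in> bitstrings (Suc n). hw x = q}) =
     card ((Cons True) ` {x \<in> bitstrings n. Suc (hw x) = q}) + card ((Cons False) ` {x \<in> bitstrings n. hw x = q})"
    unfolding e by (rule card_Un_disjoint) auto
  show ?case
  proof (cases q)
    case 0
    then show ?thesis using c Suc[of 0] by (simp add: card_image)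
  next
    case (Suc q')
    have "{x \<in> bitstrings n. Suc (hw x) = q} = {x \<in> bitstrings n. hw x = q'}" using Suc by auto
    then show ?thesis using c Suc.IH[of q'] Suc.IH[of q] \<open>q = Suc q'\<close> by (simp add: card_image)
  qed
qed

definition lists_k :: "nat \<Rightarrow> 'a set \<Rightarrow> 'a list set" where
  "lists_k k B = {xs. length xs = k \<and> set xs \<subseteq> B}"

lemma finite_lists_k[simp]: "finite B \<Longrightarrow> finite (lists_k k B)"
  unfolding lists_k_def using finite_lists_length_eq[of B k] by (simp add: conj_commute)

lemma lists_k_Suc: "lists_k (Suc k) B = (\<lambda>(x,xs). x # xs) ` (B \<times> lists_k k B)"
  unfolding lists_k_def by (auto simp: length_Suc_conv image_iff)

lemma sum_lists_prod:
  fixes f :: "'a \<Rightarrow> 'b::comm_semiring_1"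
  assumes "finite B"
  shows "(\<Sum>xs\<in>lists_k k B. \<Prod>i<k. f (xs ! i)) = (\<Sum>x\<in>B. f x) ^ k"
proof (induction k)
  case 0
  have "lists_k 0 B = {[]}" by (auto simp: lists_k_def)
  then show ?case by simp
next
  case (Suc k)
  have inj: "inj_on (\<lambda>(x,xs). x # xs) (B \<times> lists_k k B)" by (auto simp: inj_on_def)
  have "(\<Sum>xs\<in>lists_k (Suc k) B. \<Prod>i<Suc k. f (xs ! i))
      = (\<Sum>p\<in>B \<times> lists_k k B. \<Prod>i<Suc k. f (((\<lambda>(x,xs). x # xs) p) ! i))"
    unfolding lists_k_Suc by (subst sum.reindex[OF inj]) (simp add: o_def)
  also have "\<dots> = (\<Sum>p\<in>B \<times> lists_k k B. f (fst p) * (\<Prod>i<k. f (snd p ! i)))"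
    by (rule sum.cong) (auto simp only: prod.lessThan_Suc_shift split: prod.splits, simp)
  also have "\<dots> = (\<Sum>x\<in>B. \<Sum>xs\<in>lists_k k B. f x * (\<Prod>i<k. f (xs ! i)))"
    by (simp add: sum.cartesian_product case_prod_beta)
  also have "\<dots> = (\<Sum>x\<in>B. f x) * (\<Sum>xs\<in>lists_k k B. \<Prod>i<k. f (xs ! i))"
    by (rule sum_product[symmetric])
  finally show ?case using Suc by simp
qed

definition ip :: "nat \<Rightarrow> (bool list \<Rightarrow> complex) \<Rightarrow> (bool list \<Rightarrow> complex) \<Rightarrow> complex" where
  "ip n u v = (\<Sum>x\<in>bitstrings n. cnj (u x) * v x)"

lemma apply_op_eq: "x \<in> bitstrings n \<Longrightarrow> apply_op n U u x = (\<Sum>y\<in>bitstrings n. U x y * u y)"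
  by (simp add: apply_op_def)

lemma mult_delta_l[simp]: "(if P then 1 else 0) * (a::complex) = (if P then a else 0)" by simp
lemma mult_delta_r[simp]: "(a::complex) * (if P then 1 else 0) = (if P then a else 0)" by simp

lemma unitary_ip:
  assumes U: "charge_unitary n U"
  shows "ip n (apply_op n U u) (apply_op n U v) = ip n u v"
proof -
  let ?B = "bitstrings n"
  have orth: "\<And>y y'. y \<in> ?B \<Longrightarrow> y' \<in> ?B \<Longrightarrow> (\<Sum>x\<in>?B. cnj (U x y) * U x y') = (if y = y' then 1 else 0)"
    using U by (simp add: charge_unitary_def)
  have "ip n (apply_op n U u) (apply_op n U v)
      = (\<Sum>x\<in>?B. (\<Sum>y\<in>?B. cnj (U x y) * cnj (u y)) * (\<Sum>y'\<in>?B. U x y' * v y'))"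
    by (simp add: ip_def apply_op_def)
  also have "\<dots> = (\<Sum>x\<in>?B. \<Sum>y'\<in>?B. \<Sum>y\<in>?B. (cnj (u y) * v y') * (cnj (U x y) * U x y'))"
    by (simp add: sum_product mult_ac)
  also have "\<dots> = (\<Sum>y'\<in>?B. \<Sum>x\<in>?B. \<Sum>y\<in>?B. (cnj (u y) * v y') * (cnj (U x y) * U x y'))"
    by (rule sum.swap)
  also have "\<dots> = (\<Sum>y'\<in>?B. \<Sum>y\<in>?B. \<Sum>x\<in>?B. (cnj (u y) * v y') * (cnj (U x y) * U x y'))"
    by (rule sum.cong, simp, rule sum.swap)
  also have "\<dots> = (\<Sum>y\<in>?B. \<Sum>y'\<in>?B. \<Sum>x\<in>?B. (cnj (u y) * v y') * (cnj (U x y) * U x y'))"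
    by (rule sum.swap)
  also have "\<dots> = (\<Sum>y\<in>?B. \<Sum>y'\<in>?B. (cnj (u y) * v y') * (if y = y' then 1 else 0))"
    by (simp add: sum_distrib_left[symmetric] orth)
  also have "\<dots> = (\<Sum>y\<in>?B. cnj (u y) * v y)"
    by (rule sum.cong) (simp_all add: if_distrib cong: if_cong)
  finally show ?thesis by (simp add: ip_def)
qed

lemma sphere_facts:
  assumes "u \<in> charge_sphere n Q"
  shows "\<And>x. x \<in> bitstrings n \<Longrightarrow> hw x \<noteq> Q \<Longrightarrow> u x = 0" and "ip n u u = 1"
    and "\<And>x. x \<notin> bitstrings n \<Longrightarrow> u x = undefined"
proof -
  show "\<And>x. x \<in> bitstrings n \<Longrightarrow> hw x \<noteq> Q \<Longrightarrow> u x = 0" using assms by (auto simp: charge_sphere_def)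
  have "(\<Sum>x\<in>bitstrings n. (cmod (u x))^2) = 1" using assms by (auto simp: charge_sphere_def)
  then have "complex_of_real (\<Sum>x\<in>bitstrings n. (cmod (u x))^2) = 1" by simp
  moreover have "(\<Sum>x\<in>bitstrings n. cnj (u x) * u x) = complex_of_real (\<Sum>x\<in>bitstrings n. (cmod (u x))^2)"
    unfolding of_real_sum by (rule sum.cong) (simp, metis complex_norm_square of_real_power mult.commute)
  ultimately show "ip n u u = 1" by (simp add: ip_def)
  show "\<And>x. x \<notin> bitstrings n \<Longrightarrow> u x = undefined"
    using assms by (auto simp: charge_sphere_def state_space_def space_PiM PiE_def extensional_def)
qed

lemma ip_cnj: "ip n v u = cnj (ip n u v)"
  by (simp add: ip_def mult.commute)

lemma householder:
  assumes u: "u \<in> charge_sphere n Q" and v: "v \<in> charge_sphere n Q"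
  shows "\<exists>U. charge_unitary n U \<and> (\<forall>x\<in>bitstrings n. apply_op n U u x = v x)"
proof -
  let ?B = "bitstrings n"
  define s where "s = ip n v u"
  define z where "z = (if s = 0 then 1 else s / complex_of_real (cmod s))"
  define w where "w = (\<lambda>x. u x - z * v x)"
  define nw where "nw = (\<Sum>x\<in>?B. cnj (w x) * w x)"
  define c where "c = 2 / nw"
  define H where "H = (\<lambda>x y. (if x = y then 1 else 0) - c * w x * cnj (w y))"
  define U where "U = (\<lambda>x y. cnj z * H x y)"
  have uu: "ip n u u = 1" and vv: "ip n v v = 1" using sphere_facts u v by auto
  have zz: "cnj z * z = 1"
  proof (cases "s = 0")
    case False
    then have "cmod s \<noteq> 0" by simp
    then show ?thesis using False
      by (simp add: z_def field_simps complex_norm_square[symmetric] power2_eq_square)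
  qed (simp add: z_def)
  have zs: "cnj z * s = complex_of_real (cmod s)"
  proof (cases "s = 0")
    case False
    then show ?thesis
      by (simp add: z_def field_simps) (metis complex_norm_square of_real_mult power2_eq_square)
  qed (simp add: z_def)
  have ipvu: "ip n v u = s" by (simp add: s_def)
  have ipuv: "ip n u v = cnj s" by (simp add: s_def ip_cnj[of n u v])
  have wu: "(\<Sum>y\<in>?B. cnj (w y) * u y) = 1 - complex_of_real (cmod s)"
  proof -
    have "(\<Sum>y\<in>?B. cnj (w y) * u y) = (\<Sum>y\<in>?B. cnj (u y) * u y - cnj z * (cnj (v y) * u y))"
      by (rule sum.cong) (simp_all add: w_def left_diff_distrib mult.assoc)
    also have "\<dots> = ip n u u - cnj z * ip n v u"
      by (simp add: ip_def sum_subtractf sum_distrib_left)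
    finally show ?thesis using uu zs ipvu by simp
  qed
  have nwv: "nw = 2 - 2 * complex_of_real (cmod s)"
  proof -
    have "nw = (\<Sum>x\<in>?B. cnj (u x) * u x - z * (cnj (u x) * v x) - cnj z * (cnj (v x) * u x) + (cnj z * z) * (cnj (v x) * v x))"
      unfolding nw_def by (rule sum.cong) (simp_all add: w_def algebra_simps)
    also have "\<dots> = ip n u u - z * ip n u v - cnj z * ip n v u + (cnj z * z) * ip n v v"
      by (simp add: ip_def sum_subtractf sum.distrib sum_distrib_left)
    also have "z * ip n u v = complex_of_real (cmod s)"
      using arg_cong[OF zs, of cnj] ipuv by (simp add: mult.commute)
    finally show ?thesis using uu vv zz zs ipvu by simp
  qed
  have cr: "cnj c = c" by (simp add: c_def nwv)
  have nw0: "nw = 0 \<Longrightarrow> (\<forall>x\<in>?B. w x = 0)"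
  proof -
    assume "nw = 0"
    moreover have "nw = complex_of_real (\<Sum>x\<in>?B. (cmod (w x))^2)"
      unfolding nw_def of_real_sum by (rule sum.cong) (simp, metis complex_norm_square of_real_power mult.commute)
    ultimately have "(\<Sum>x\<in>?B. (cmod (w x))^2) = 0" by (metis of_real_eq_0_iff)
    then show ?thesis by (simp add: sum_nonneg_eq_0_iff)
  qed
  have Hu: "\<forall>x\<in>?B. (\<Sum>y\<in>?B. H x y * u y) = z * v x"
  proof
    fix x assume x: "x \<in> ?B"
    have "(\<Sum>y\<in>?B. H x y * u y) = (\<Sum>y\<in>?B. (if x = y then u y else 0) - (c * w x) * (cnj (w y) * u y))"
      by (rule sum.cong) (simp_all add: H_def left_diff_distrib mult.assoc)
    also have "\<dots> = u x - (c * w x) * (\<Sum>y\<in>?B. cnj (w y) * u y)"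
      using x by (simp add: sum_subtractf sum_distrib_left)
    also have "\<dots> = u x - w x"
    proof (cases "nw = 0")
      case True
      then show ?thesis using nw0 x by simp
    next
      case False
      then have "c * (1 - complex_of_real (cmod s)) = 1" using nwv by (simp add: c_def)
      then show ?thesis using wu by (simp add: mult.assoc mult.left_commute[of c])
    qed
    finally show "(\<Sum>y\<in>?B. H x y * u y) = z * v x" by (simp add: w_def)
  qed
  have app: "\<forall>x\<in>?B. apply_op n U u x = v x"
  proof
    fix x assume x: "x \<in> ?B"
    have "apply_op n U u x = cnj z * (\<Sum>y\<in>?B. H x y * u y)"
      using x by (simp add: apply_op_def U_def sum_distrib_left mult.assoc)
    then show "apply_op n U u x = v x" using Hu x zz by (simp add: mult.assoc[symmetric])
  qed
  have cc: "c * c * nw = 2 * c"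
    by (cases "nw = 0") (simp_all add: c_def)
  have orth: "(\<Sum>y\<in>?B. cnj (U y x) * U y x') = (if x = x' then 1 else 0)"
    if x: "x \<in> ?B" and x': "x' \<in> ?B" for x x'
  proof -
    let ?K = "c * c * w x * cnj (w x')"
    have "(\<Sum>y\<in>?B. cnj (U y x) * U y x') = (z * cnj z) * (\<Sum>y\<in>?B. cnj (H y x) * H y x')"
      by (simp add: U_def sum_distrib_left mult_ac)
    also have "z * cnj z = 1" using zz by (simp add: mult.commute)
    also have "(\<Sum>y\<in>?B. cnj (H y x) * H y x')
       = (\<Sum>y\<in>?B. (if y = x then (if y = x' then 1 else 0) - c * w y * cnj (w x') else 0)
            - (if y = x' then c * cnj (w y) * w x else 0) + ?K * (cnj (w y) * w y))"
    proof (rule sum.cong)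
      fix y assume "y \<in> ?B"
      show "cnj (H y x) * H y x' = (if y = x then (if y = x' then 1 else 0) - c * w y * cnj (w x') else 0)
            - (if y = x' then c * cnj (w y) * w x else 0) + ?K * (cnj (w y) * w y)"
        by (cases "y = x"; cases "y = x'") (simp_all add: H_def cr algebra_simps)
    qed simp
    also have "\<dots> = ((if x = x' then 1 else 0) - c * w x * cnj (w x')) - c * cnj (w x') * w x + ?K * nw"
      using x x' by (simp add: sum.distrib sum_subtractf sum_distrib_left nw_def)
    also have "\<dots> = (if x = x' then 1 else 0) + (c * c * nw - 2 * c) * (w x * cnj (w x'))"
      by (simp add: algebra_simps)
    also have "\<dots> = (if x = x' then 1 else 0)" using cc by simp
    finally show ?thesis by simp
  qed
  have charge: "U x y = 0" if "x \<in> ?B" "y \<in> ?B" "hw x \<noteq> hw y" for x y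
  proof -
    have "x \<noteq> y" using that by auto
    moreover have "w x = 0 \<or> w y = 0"
    proof (cases "hw x = Q")
      case True
      then have "hw y \<noteq> Q" using that by auto
      then show ?thesis using that sphere_facts(1)[OF u] sphere_facts(1)[OF v] by (auto simp: w_def)
    next
      case False
      then show ?thesis using that sphere_facts(1)[OF u] sphere_facts(1)[OF v] by (auto simp: w_def)
    qed
    ultimately show ?thesis by (auto simp: U_def H_def)
  qed
  have "charge_unitary n U" using orth charge by (simp add: charge_unitary_def)
  then show ?thesis using app by blast
qed

lemma cnj_meas[measurable (raw)]:
  "f \<in> borel_measurable M \<Longrightarrow> (\<lambda>x. cnj (f x)) \<in> borel_measurable M"
  by (rule borel_measurable_continuous_on[where f=cnj]) (auto intro: continuous_on_cnj continuous_on_id)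

lemma nth_in: "set xs \<subseteq> B \<Longrightarrow> i < length xs \<Longrightarrow> xs ! i \<in> B"
  using nth_mem by blast

lemma tp_restrict:
  assumes "set xs \<subseteq> B" "set ys \<subseteq> B" "length xs = k" "length ys = k"
  shows "tensor_proj k (restrict v B) xs ys = tensor_proj k v xs ys"
  unfolding tensor_proj_def using assms by (intro prod.cong) (auto simp: nth_in)

lemma tp_cnj: "tensor_proj k v ys xs = cnj (tensor_proj k v xs ys)"
  by (simp add: tensor_proj_def mult.commute)

lemma tp_meas:
  assumes m: "\<forall>x\<in>B. (\<lambda>\<Phi>. \<phi> \<Phi> x) \<in> borel_measurable M"
    and "set xs \<subseteq> B" "set ys \<subseteq> B" "length xs = k" "length ys = k"
  shows "(\<lambda>\<Phi>. tensor_proj k (\<phi> \<Phi>) xs ys) \<in> borel_measurable M"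
  unfolding tensor_proj_def
proof (rule borel_measurable_prod)
  fix i assume "i \<in> {..<k}"
  then have "xs ! i \<in> B" "ys ! i \<in> B" using assms by (auto simp: nth_in)
  then have a: "(\<lambda>\<Phi>. \<phi> \<Phi> (xs ! i)) \<in> borel_measurable M" and b: "(\<lambda>\<Phi>. \<phi> \<Phi> (ys ! i)) \<in> borel_measurable M"
    using m by auto
  show "(\<lambda>\<Phi>. \<phi> \<Phi> (xs ! i) * cnj (\<phi> \<Phi> (ys ! i))) \<in> borel_measurable M"
    using a b by measurable
qed

lemma sphere_bound:
  assumes "u \<in> charge_sphere n Q" "x \<in> bitstrings n"
  shows "cmod (u x) \<le> 1"
proof -
  have s: "(\<Sum>x\<in>bitstrings n. (cmod (u x))^2) = 1" using assms by (auto simp: charge_sphere_def)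
  have "(cmod (u x))^2 \<le> (\<Sum>x\<in>bitstrings n. (cmod (u x))^2)"
    using assms(2) by (intro member_le_sum) auto
  then have "(cmod (u x))^2 \<le> 1^2" using s by simp
  then show ?thesis by (rule power2_le_imp_le) simp
qed

lemma tp_bound:
  assumes "u \<in> charge_sphere n Q" "set xs \<subseteq> bitstrings n" "set ys \<subseteq> bitstrings n" "length xs = k" "length ys = k"
  shows "cmod (tensor_proj k u xs ys) \<le> 1"
  unfolding tensor_proj_def prod_norm[symmetric]
proof (rule prod_le_1)
  fix i assume "i \<in> {..<k}"
  then have "xs ! i \<in> bitstrings n" "ys ! i \<in> bitstrings n" using assms by (auto simp: nth_in)
  then have "cmod (u (xs ! i)) \<le> 1" "cmod (u (ys ! i)) \<le> 1" using sphere_bound assms(1) by auto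
  then show "0 \<le> cmod (u (xs ! i) * cnj (u (ys ! i))) \<and> cmod (u (xs ! i) * cnj (u (ys ! i))) \<le> 1"
    by (simp add: norm_mult mult_le_one)
qed

lemma ip_power_expand:
  fixes a b :: "bool list \<Rightarrow> complex"
  shows "complex_of_real ((cmod (ip n a b))^(2*k)) =
     (\<Sum>xs\<in>lists_k k (bitstrings n). \<Sum>ys\<in>lists_k k (bitstrings n). tensor_proj k b xs ys * tensor_proj k a ys xs)"
proof -
  let ?L = "lists_k k (bitstrings n)"
  have "(\<Sum>xs\<in>?L. \<Sum>ys\<in>?L. tensor_proj k b xs ys * tensor_proj k a ys xs)
      = (\<Sum>xs\<in>?L. \<Sum>ys\<in>?L. (\<Prod>i<k. cnj (a (xs!i)) * b (xs!i)) * (\<Prod>i<k. a (ys!i) * cnj (b (ys!i))))"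
    by (intro sum.cong refl) (simp add: tensor_proj_def prod.distrib[symmetric] mult_ac)
  also have "\<dots> = (\<Sum>xs\<in>?L. \<Prod>i<k. cnj (a (xs!i)) * b (xs!i)) * (\<Sum>ys\<in>?L. \<Prod>i<k. a (ys!i) * cnj (b (ys!i)))"
    by (rule sum_product[symmetric])
  also have "\<dots> = (ip n a b)^k * (cnj (ip n a b))^k"
  proof -
    have 1: "(\<Sum>xs\<in>?L. \<Prod>i<k. cnj (a (xs!i)) * b (xs!i)) = (ip n a b)^k"
      unfolding ip_def by (rule sum_lists_prod[OF finite_bitstrings])
    have 2: "(\<Sum>ys\<in>?L. \<Prod>i<k. a (ys!i) * cnj (b (ys!i))) = (\<Sum>x\<in>bitstrings n. a x * cnj (b x))^k"
      by (rule sum_lists_prod[OF finite_bitstrings])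
    show ?thesis unfolding 1 2 by (simp add: ip_def)
  qed
  also have "\<dots> = (ip n a b * cnj (ip n a b))^k" by (simp add: power_mult_distrib)
  also have "\<dots> = complex_of_real ((cmod (ip n a b))^(2*k))"
    by (simp add: complex_norm_square[symmetric] power_mult)
  finally show ?thesis by simp
qed

lemma apply_op_meas:
  "apply_op n U \<in> measurable (state_space n) (state_space n)"
  unfolding apply_op_def state_space_def
  by (intro measurable_restrict borel_measurable_sum borel_measurable_times borel_measurable_const
      measurable_component_singleton) auto

lemma comp_meas: "x \<in> bitstrings n \<Longrightarrow> (\<lambda>\<phi>. \<phi> x) \<in> borel_measurable (state_space n)"
  unfolding state_space_def by (rule measurable_component_singleton)

lemma haar_inv:
  fixes f :: "(bool list \<Rightarrow> complex) \<Rightarrow> real"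
  assumes h: "haar_sector n Q \<nu>" and U: "charge_unitary n U" and f: "f \<in> borel_measurable (state_space n)"
  shows "(\<integral>\<phi>. f (apply_op n U \<phi>) \<partial>\<nu>) = (\<integral>\<phi>. f \<phi> \<partial>\<nu>)"
proof -
  have s: "sets \<nu> = sets (state_space n)" using h by (simp add: haar_sector_def)
  have d: "distr \<nu> \<nu> (apply_op n U) = \<nu>" using h U by (simp add: haar_sector_def)
  have m: "apply_op n U \<in> measurable \<nu> \<nu>"
    using apply_op_meas by (simp add: measurable_cong_sets[OF s s])
  have f': "f \<in> borel_measurable \<nu>" using f by (simp add: measurable_cong_sets[OF s refl])
  have "(\<integral>\<phi>. f \<phi> \<partial>\<nu>) = (\<integral>\<phi>. f \<phi> \<partial>(distr \<nu> \<nu> (apply_op n U)))" by (simp add: d)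
  also have "\<dots> = (\<integral>\<phi>. f (apply_op n U \<phi>) \<partial>\<nu>)" by (rule integral_distr[OF m f'])
  finally show ?thesis by simp
qed

definition good :: "nat \<Rightarrow> nat \<Rightarrow> nat \<Rightarrow> 'b measure \<Rightarrow> ('b \<Rightarrow> real) \<Rightarrow> ('b \<Rightarrow> bool list \<Rightarrow> complex) \<Rightarrow> bool" where
  "good n Q k M \<rho> \<phi> \<longleftrightarrow> prob_space M \<and> \<rho> \<in> borel_measurable M \<and>
     (\<forall>x\<in>bitstrings n. (\<lambda>\<Phi>. \<phi> \<Phi> x) \<in> borel_measurable M) \<and>
     (AE \<Phi> in M. \<bar>\<rho> \<Phi>\<bar> \<le> 1) \<and> (AE \<Phi> in M. \<rho> \<Phi> \<noteq> 0 \<longrightarrow> \<phi> \<Phi> \<in> charge_sphere n Q) \<and>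
     (\<forall>V u. charge_unitary n V \<longrightarrow>
        (\<integral>\<Phi>. \<rho> \<Phi> * (cmod (ip n u (apply_op n V (\<phi> \<Phi>))))^(2*k) \<partial>M) = (\<integral>\<Phi>. \<rho> \<Phi> * (cmod (ip n u (\<phi> \<Phi>)))^(2*k) \<partial>M))"

definition Tm :: "nat \<Rightarrow> 'b measure \<Rightarrow> ('b \<Rightarrow> real) \<Rightarrow> ('b \<Rightarrow> bool list \<Rightarrow> complex) \<Rightarrow> bool list list \<Rightarrow> bool list list \<Rightarrow> complex" where
  "Tm k M \<rho> \<phi> xs ys = (\<integral>\<Phi>. complex_of_real (\<rho> \<Phi>) * tensor_proj k (\<phi> \<Phi>) xs ys \<partial>M)"

lemma ip_meas:
  assumes "\<forall>x\<in>bitstrings n. (\<lambda>\<Phi>. \<phi> \<Phi> x) \<in> borel_measurable M"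
  shows "(\<lambda>\<Phi>. ip n u (\<phi> \<Phi>)) \<in> borel_measurable M"
  unfolding ip_def using assms by (intro borel_measurable_sum borel_measurable_times) auto

lemma good_int:
  assumes g: "good n Q k M \<rho> \<phi>" and xs: "xs \<in> lists_k k (bitstrings n)" and ys: "ys \<in> lists_k k (bitstrings n)"
  shows "integrable M (\<lambda>\<Phi>. complex_of_real (\<rho> \<Phi>) * tensor_proj k (\<phi> \<Phi>) xs ys)"
proof -
  interpret prob_space M using g by (simp add: good_def)
  have m: "(\<lambda>\<Phi>. tensor_proj k (\<phi> \<Phi>) xs ys) \<in> borel_measurable M"
    using g xs ys by (intro tp_meas[where B="bitstrings n"]) (auto simp: good_def lists_k_def)
  have rm: "\<rho> \<in> borel_measurable M" using g by (simp add: good_def)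
  show ?thesis
  proof (rule integrable_const_bound[where B=1])
    show "(\<lambda>\<Phi>. complex_of_real (\<rho> \<Phi>) * tensor_proj k (\<phi> \<Phi>) xs ys) \<in> borel_measurable M"
      using m rm by measurable
    have "AE \<Phi> in M. \<bar>\<rho> \<Phi>\<bar> \<le> 1" "AE \<Phi> in M. \<rho> \<Phi> \<noteq> 0 \<longrightarrow> \<phi> \<Phi> \<in> charge_sphere n Q"
      using g by (auto simp: good_def)
    then show "AE \<Phi> in M. norm (complex_of_real (\<rho> \<Phi>) * tensor_proj k (\<phi> \<Phi>) xs ys) \<le> 1"
    proof eventually_elim
      case (elim \<Phi>)
      show ?case
      proof (cases "\<rho> \<Phi> = 0")
        case False
        then have "cmod (tensor_proj k (\<phi> \<Phi>) xs ys) \<le> 1"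
          using elim xs ys by (intro tp_bound) (auto simp: lists_k_def)
        then show ?thesis using elim by (simp add: norm_mult mult_le_one)
      qed simp
    qed
  qed
qed

lemma integral_dsum:
  fixes g :: "'i \<Rightarrow> 'i \<Rightarrow> 'b \<Rightarrow> complex"
  assumes "finite A" "\<And>a b. a \<in> A \<Longrightarrow> b \<in> A \<Longrightarrow> integrable M (g a b)"
  shows "(\<integral>x. (\<Sum>a\<in>A. \<Sum>b\<in>A. c a b * g a b x) \<partial>M) = (\<Sum>a\<in>A. \<Sum>b\<in>A. c a b * (\<integral>x. g a b x \<partial>M))"
proof -
  have "(\<integral>x. (\<Sum>a\<in>A. \<Sum>b\<in>A. c a b * g a b x) \<partial>M) = (\<Sum>a\<in>A. \<integral>x. (\<Sum>b\<in>A. c a b * g a b x) \<partial>M)"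
    using assms by (intro Bochner_Integration.integral_sum) auto
  also have "\<dots> = (\<Sum>a\<in>A. \<Sum>b\<in>A. \<integral>x. c a b * g a b x \<partial>M)"
    using assms by (intro sum.cong refl Bochner_Integration.integral_sum) auto
  finally show ?thesis by simp
qed

lemma good_G:
  assumes g: "good n Q k M \<rho> \<phi>"
  shows "(\<Sum>xs\<in>lists_k k (bitstrings n). \<Sum>ys\<in>lists_k k (bitstrings n). Tm k M \<rho> \<phi> xs ys * tensor_proj k u ys xs)
     = complex_of_real (\<integral>\<Phi>. \<rho> \<Phi> * (cmod (ip n u (\<phi> \<Phi>)))^(2*k) \<partial>M)"
proof -
  let ?L = "lists_k k (bitstrings n)"
  have "complex_of_real (\<integral>\<Phi>. \<rho> \<Phi> * (cmod (ip n u (\<phi> \<Phi>)))^(2*k) \<partial>M)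
      = (\<integral>\<Phi>. complex_of_real (\<rho> \<Phi>) * complex_of_real ((cmod (ip n u (\<phi> \<Phi>)))^(2*k)) \<partial>M)"
    by (simp flip: integral_complex_of_real)
  also have "\<dots> = (\<integral>\<Phi>. (\<Sum>xs\<in>?L. \<Sum>ys\<in>?L. tensor_proj k u ys xs * (complex_of_real (\<rho> \<Phi>) * tensor_proj k (\<phi> \<Phi>) xs ys)) \<partial>M)"
    by (rule Bochner_Integration.integral_cong[OF refl]) (subst ip_power_expand, simp add: sum_distrib_left mult_ac)
  also have "\<dots> = (\<Sum>xs\<in>?L. \<Sum>ys\<in>?L. tensor_proj k u ys xs * Tm k M \<rho> \<phi> xs ys)"
    unfolding Tm_def using g by (intro integral_dsum good_int) auto
  finally show ?thesis by (simp add: mult.commute)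
qed

lemma good_const:
  assumes g: "good n Q k M \<rho> \<phi>" and u: "u \<in> charge_sphere n Q" and v: "v \<in> charge_sphere n Q"
  shows "(\<Sum>xs\<in>lists_k k (bitstrings n). \<Sum>ys\<in>lists_k k (bitstrings n). Tm k M \<rho> \<phi> xs ys * tensor_proj k u ys xs)
    = (\<Sum>xs\<in>lists_k k (bitstrings n). \<Sum>ys\<in>lists_k k (bitstrings n). Tm k M \<rho> \<phi> xs ys * tensor_proj k v ys xs)"
proof -
  obtain V where V: "charge_unitary n V" "\<forall>x\<in>bitstrings n. apply_op n V v x = u x"
    using householder[OF v u] by blast
  have e: "ip n u (apply_op n V \<psi>) = ip n v \<psi>" for \<psi>
  proof -
    have "ip n u (apply_op n V \<psi>) = ip n (apply_op n V v) (apply_op n V \<psi>)"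
      unfolding ip_def by (intro sum.cong) (simp_all add: V(2))
    also have "\<dots> = ip n v \<psi>" by (rule unitary_ip[OF V(1)])
    finally show ?thesis .
  qed
  have "(\<integral>\<Phi>. \<rho> \<Phi> * (cmod (ip n u (apply_op n V (\<phi> \<Phi>))))^(2*k) \<partial>M) = (\<integral>\<Phi>. \<rho> \<Phi> * (cmod (ip n u (\<phi> \<Phi>)))^(2*k) \<partial>M)"
    using g V(1) by (simp add: good_def)
  then show ?thesis unfolding good_G[OF g] e by simp
qed

lemma good_haar:
  assumes h: "haar_sector n Q \<nu>"
  shows "good n Q k \<nu> (\<lambda>_. 1) (\<lambda>\<phi>. \<phi>)"
proof -
  have s: "sets \<nu> = sets (state_space n)" using h by (simp add: haar_sector_def)
  have cm: "\<forall>x\<in>bitstrings n. (\<lambda>\<phi>. \<phi> x) \<in> borel_measurable \<nu>"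
    using comp_meas by (simp add: measurable_cong_sets[OF s refl])
  have inv: "(\<integral>\<Phi>. 1 * (cmod (ip n u (apply_op n V \<Phi>)))^(2*k) \<partial>\<nu>) = (\<integral>\<Phi>. 1 * (cmod (ip n u \<Phi>))^(2*k) \<partial>\<nu>)"
    if V: "charge_unitary n V" for V u
  proof -
    have "(\<lambda>\<Phi>. ip n u \<Phi>) \<in> borel_measurable (state_space n)"
      using ip_meas[of n "\<lambda>\<phi>. \<phi>"] comp_meas by auto
    then have "(\<lambda>\<Phi>. 1 * (cmod (ip n u \<Phi>))^(2*k)) \<in> borel_measurable (state_space n)" by measurable
    from haar_inv[OF h V this] show ?thesis .
  qed
  show ?thesis using h cm inv by (auto simp: good_def haar_sector_def)
qed

lemma good_zero:
  assumes g: "good n Q k M \<rho> \<phi>"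
    and D: "\<forall>u\<in>charge_sphere n Q. (\<Sum>xs\<in>lists_k k (bitstrings n). \<Sum>ys\<in>lists_k k (bitstrings n). D xs ys * tensor_proj k u ys xs) = 0"
  shows "(\<Sum>xs\<in>lists_k k (bitstrings n). \<Sum>ys\<in>lists_k k (bitstrings n). D xs ys * Tm k M \<rho> \<phi> ys xs) = 0"
proof -
  let ?L = "lists_k k (bitstrings n)"
  interpret prob_space M using g by (simp add: good_def)
  have "(\<Sum>xs\<in>?L. \<Sum>ys\<in>?L. D xs ys * Tm k M \<rho> \<phi> ys xs)
     = (\<integral>\<Phi>. (\<Sum>xs\<in>?L. \<Sum>ys\<in>?L. D xs ys * (complex_of_real (\<rho> \<Phi>) * tensor_proj k (\<phi> \<Phi>) ys xs)) \<partial>M)"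
    unfolding Tm_def using g by (intro integral_dsum[symmetric] good_int) auto
  also have "\<dots> = (\<integral>\<Phi>. 0 \<partial>M)"
  proof (rule integral_cong_AE)
    show "(\<lambda>\<Phi>. \<Sum>xs\<in>?L. \<Sum>ys\<in>?L. D xs ys * (complex_of_real (\<rho> \<Phi>) * tensor_proj k (\<phi> \<Phi>) ys xs)) \<in> borel_measurable M"
      using g by (intro borel_measurable_sum borel_measurable_times borel_measurable_const
           borel_measurable_integrable good_int) auto
    show "(\<lambda>\<Phi>. 0::complex) \<in> borel_measurable M" by simp
    have "AE \<Phi> in M. \<rho> \<Phi> \<noteq> 0 \<longrightarrow> \<phi> \<Phi> \<in> charge_sphere n Q" using g by (simp add: good_def)
    then show "AE \<Phi> in M. (\<Sum>xs\<in>?L. \<Sum>ys\<in>?L. D xs ys * (complex_of_real (\<rho> \<Phi>) * tensor_proj k (\<phi> \<Phi>) ys xs)) = 0"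
    proof eventually_elim
      case (elim \<Phi>)
      show ?case
      proof (cases "\<rho> \<Phi> = 0")
        case False
        then have "(\<Sum>xs\<in>?L. \<Sum>ys\<in>?L. D xs ys * tensor_proj k (\<phi> \<Phi>) ys xs) = 0" using D elim by auto
        then have "complex_of_real (\<rho> \<Phi>) * (\<Sum>xs\<in>?L. \<Sum>ys\<in>?L. D xs ys * tensor_proj k (\<phi> \<Phi>) ys xs) = 0" by simp
        then show ?thesis by (simp add: sum_distrib_left mult_ac)
      qed simp
    qed
  qed
  finally show ?thesis by simp
qed

lemma tp_cnj2: "cnj (tensor_proj k v xs ys) = tensor_proj k v ys xs"
  by (simp add: tensor_proj_def mult.commute)

lemma good_herm:
  "cnj (Tm k M \<rho> \<phi> xs ys) = Tm k M \<rho> \<phi> ys xs"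
proof -
  have "cnj (Tm k M \<rho> \<phi> xs ys) = (\<integral>\<Phi>. cnj (complex_of_real (\<rho> \<Phi>) * tensor_proj k (\<phi> \<Phi>) xs ys) \<partial>M)"
    unfolding Tm_def by (rule Bochner_Integration.integral_cnj[symmetric])
  also have "\<dots> = Tm k M \<rho> \<phi> ys xs"
    unfolding Tm_def by (simp only: complex_cnj_mult complex_cnj_complex_of_real tp_cnj2)
  finally show ?thesis .
qed

lemma transfer:
  assumes g: "good n Q k M \<rho> \<phi>" and h: "haar_sector n Q \<nu>"
    and xs: "xs \<in> lists_k k (bitstrings n)" and ys: "ys \<in> lists_k k (bitstrings n)"
  shows "Tm k M \<rho> \<phi> xs ys = complex_of_real (\<integral>\<Phi>. \<rho> \<Phi> \<partial>M) * (\<integral>\<phi>. tensor_proj k \<phi> xs ys \<partial>\<nu>)"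
proof -
  let ?L = "lists_k k (bitstrings n)"
  let ?S = "charge_sphere n Q"
  define T1 where "T1 = Tm k M \<rho> \<phi>"
  define T2 where "T2 = Tm k \<nu> (\<lambda>_. 1) (\<lambda>\<phi>. \<phi>)"
  have gn: "good n Q k \<nu> (\<lambda>_. 1) (\<lambda>\<phi>. \<phi>)" by (rule good_haar[OF h])
  define m where "m = complex_of_real (\<integral>\<Phi>. \<rho> \<Phi> \<partial>M)"
  define G1 where "G1 u = (\<Sum>xs\<in>?L. \<Sum>ys\<in>?L. T1 xs ys * tensor_proj k u ys xs)" for u
  define G2 where "G2 u = (\<Sum>xs\<in>?L. \<Sum>ys\<in>?L. T2 xs ys * tensor_proj k u ys xs)" for u
  have Pn: "prob_space \<nu>" using h by (simp add: haar_sector_def)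
  have PM: "prob_space M" using g by (simp add: good_def)
  have aes: "AE \<phi> in \<nu>. \<phi> \<in> ?S" using h by (simp add: haar_sector_def)
  obtain u0 where u0: "u0 \<in> ?S"
  proof -
    have "?S \<noteq> {}"
    proof
      assume "?S = {}"
      then have "AE \<phi> in \<nu>. False" using aes by simp
      then show False using prob_space.AE_False[OF Pn] by simp
    qed
    then show ?thesis using that by blast
  qed
  have G1c: "G1 u = G1 u0" if "u \<in> ?S" for u
    unfolding G1_def T1_def using good_const[OF g that u0] .
  have G2c: "G2 u = G2 u0" if "u \<in> ?S" for u
    unfolding G2_def T2_def using good_const[OF gn that u0] .
  have A: "(\<Sum>xs\<in>?L. \<Sum>ys\<in>?L. T1 xs ys * T2 ys xs) = G1 u0"
  proof -
    have "(\<Sum>xs\<in>?L. \<Sum>ys\<in>?L. T1 xs ys * T2 ys xs)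
        = (\<integral>u. (\<Sum>xs\<in>?L. \<Sum>ys\<in>?L. T1 xs ys * (complex_of_real 1 * tensor_proj k u ys xs)) \<partial>\<nu>)"
      unfolding T2_def Tm_def
      by (rule integral_dsum[symmetric]) (auto intro: good_int[OF gn, simplified])
    also have "\<dots> = (\<integral>u. G1 u0 \<partial>\<nu>)"
    proof (rule integral_cong_AE)
      show "(\<lambda>u. \<Sum>xs\<in>?L. \<Sum>ys\<in>?L. T1 xs ys * (complex_of_real 1 * tensor_proj k u ys xs)) \<in> borel_measurable \<nu>"
        using good_int[OF gn] by (intro borel_measurable_sum borel_measurable_times borel_measurable_const
           borel_measurable_integrable) auto
      show "(\<lambda>u. G1 u0) \<in> borel_measurable \<nu>" by simp
      show "AE u in \<nu>. (\<Sum>xs\<in>?L. \<Sum>ys\<in>?L. T1 xs ys * (complex_of_real 1 * tensor_proj k u ys xs)) = G1 u0"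
        using aes
      proof eventually_elim
        case (elim u)
        then show ?case using G1c[OF elim] by (simp add: G1_def)
      qed
    qed
    also have "\<dots> = G1 u0" using prob_space.prob_space[OF Pn] by (simp add: measure_def prob_space.emeasure_space_1[OF Pn])
    finally show ?thesis .
  qed
  have B: "(\<Sum>xs\<in>?L. \<Sum>ys\<in>?L. T2 xs ys * T1 ys xs) = G2 u0 * m"
  proof -
    have "(\<Sum>xs\<in>?L. \<Sum>ys\<in>?L. T2 xs ys * T1 ys xs)
        = (\<integral>\<Phi>. (\<Sum>xs\<in>?L. \<Sum>ys\<in>?L. T2 xs ys * (complex_of_real (\<rho> \<Phi>) * tensor_proj k (\<phi> \<Phi>) ys xs)) \<partial>M)"
      unfolding T1_def Tm_def
      by (rule integral_dsum[symmetric]) (auto intro: good_int[OF g])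
    also have "\<dots> = (\<integral>\<Phi>. complex_of_real (\<rho> \<Phi>) * G2 u0 \<partial>M)"
    proof (rule integral_cong_AE)
      show "(\<lambda>\<Phi>. \<Sum>xs\<in>?L. \<Sum>ys\<in>?L. T2 xs ys * (complex_of_real (\<rho> \<Phi>) * tensor_proj k (\<phi> \<Phi>) ys xs)) \<in> borel_measurable M"
        using good_int[OF g] by (intro borel_measurable_sum borel_measurable_times borel_measurable_const
           borel_measurable_integrable) auto
      have "\<rho> \<in> borel_measurable M" using g by (simp add: good_def)
      then show "(\<lambda>\<Phi>. complex_of_real (\<rho> \<Phi>) * G2 u0) \<in> borel_measurable M" by measurable
      have "AE \<Phi> in M. \<rho> \<Phi> \<noteq> 0 \<longrightarrow> \<phi> \<Phi> \<in> ?S" using g by (simp add: good_def)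
      then show "AE \<Phi> in M. (\<Sum>xs\<in>?L. \<Sum>ys\<in>?L. T2 xs ys * (complex_of_real (\<rho> \<Phi>) * tensor_proj k (\<phi> \<Phi>) ys xs))
           = complex_of_real (\<rho> \<Phi>) * G2 u0"
      proof eventually_elim
        case (elim \<Phi>)
        have "(\<Sum>xs\<in>?L. \<Sum>ys\<in>?L. T2 xs ys * (complex_of_real (\<rho> \<Phi>) * tensor_proj k (\<phi> \<Phi>) ys xs))
            = complex_of_real (\<rho> \<Phi>) * G2 (\<phi> \<Phi>)"
          by (simp add: G2_def sum_distrib_left mult_ac)
        also have "\<dots> = complex_of_real (\<rho> \<Phi>) * G2 u0"
          using elim G2c by (cases "\<rho> \<Phi> = 0") auto
        finally show ?case .
      qed
    qed
    also have "\<dots> = G2 u0 * m" by (simp add: m_def mult.commute)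
    finally show ?thesis .
  qed
  have C: "(\<Sum>xs\<in>?L. \<Sum>ys\<in>?L. T1 xs ys * T2 ys xs) = (\<Sum>xs\<in>?L. \<Sum>ys\<in>?L. T2 xs ys * T1 ys xs)"
    by (subst sum.swap) (simp add: mult.commute)
  have c: "G1 u0 = G2 u0 * m" using A B C by simp
  define D where "D xs ys = T1 xs ys - m * T2 xs ys" for xs ys
  have DE: "\<forall>u\<in>?S. (\<Sum>xs\<in>?L. \<Sum>ys\<in>?L. D xs ys * tensor_proj k u ys xs) = 0"
  proof
    fix u assume u: "u \<in> ?S"
    have "(\<Sum>xs\<in>?L. \<Sum>ys\<in>?L. D xs ys * tensor_proj k u ys xs) = G1 u - m * G2 u"
      by (simp add: D_def G1_def G2_def left_diff_distrib sum_subtractf sum_distrib_left mult.assoc)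
    also have "\<dots> = 0" using G1c[OF u] G2c[OF u] c by simp
    finally show "(\<Sum>xs\<in>?L. \<Sum>ys\<in>?L. D xs ys * tensor_proj k u ys xs) = 0" .
  qed
  have Z1: "(\<Sum>xs\<in>?L. \<Sum>ys\<in>?L. D xs ys * T1 ys xs) = 0" unfolding T1_def by (rule good_zero[OF g DE])
  have Z2: "(\<Sum>xs\<in>?L. \<Sum>ys\<in>?L. D xs ys * T2 ys xs) = 0" unfolding T2_def by (rule good_zero[OF gn DE])
  have herm: "cnj (D xs ys) = D ys xs" for xs ys
    by (simp add: D_def m_def T1_def T2_def good_herm)
  have "(\<Sum>xs\<in>?L. \<Sum>ys\<in>?L. D xs ys * cnj (D xs ys)) = (\<Sum>xs\<in>?L. \<Sum>ys\<in>?L. D xs ys * T1 ys xs) - m * (\<Sum>xs\<in>?L. \<Sum>ys\<in>?L. D xs ys * T2 ys xs)"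
  proof -
    have "(\<Sum>xs\<in>?L. \<Sum>ys\<in>?L. D xs ys * cnj (D xs ys)) = (\<Sum>xs\<in>?L. \<Sum>ys\<in>?L. D xs ys * T1 ys xs - m * (D xs ys * T2 ys xs))"
    proof (intro sum.cong refl)
      fix a b
      show "D a b * cnj (D a b) = D a b * T1 b a - m * (D a b * T2 b a)"
        by (simp only: herm D_def[of b a]) (simp add: algebra_simps)
    qed
    then show ?thesis by (simp add: sum_subtractf sum_distrib_left)
  qed
  also have "\<dots> = 0" using Z1 Z2 by simp
  finally have z: "(\<Sum>xs\<in>?L. \<Sum>ys\<in>?L. D xs ys * cnj (D xs ys)) = 0" .
  have e: "(\<Sum>xs\<in>?L. \<Sum>ys\<in>?L. D xs ys * cnj (D xs ys)) = complex_of_real (\<Sum>xs\<in>?L. \<Sum>ys\<in>?L. (cmod (D xs ys))^2)"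
  proof -
    have pw: "\<And>a b. D a b * cnj (D a b) = complex_of_real ((cmod (D a b))^2)"
      by (rule complex_norm_square[symmetric])
    show ?thesis by (simp only: pw of_real_sum)
  qed
  have "complex_of_real (\<Sum>xs\<in>?L. \<Sum>ys\<in>?L. (cmod (D xs ys))^2) = 0" using e z by (simp only:)
  then have z2: "(\<Sum>xs\<in>?L. \<Sum>ys\<in>?L. (cmod (D xs ys))^2) = 0" by (simp only: of_real_eq_0_iff)
  have nn: "\<And>a. 0 \<le> (\<Sum>ys\<in>?L. (cmod (D a ys))^2)" by (intro sum_nonneg) simp
  have iff1: "((\<Sum>a\<in>?L. \<Sum>ys\<in>?L. (cmod (D a ys))^2) = 0) = (\<forall>a\<in>?L. (\<Sum>ys\<in>?L. (cmod (D a ys))^2) = 0)"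
    by (rule sum_nonneg_eq_0_iff) (simp_all add: nn)
  have "(\<Sum>ys\<in>?L. (cmod (D xs ys))^2) = 0" using iff1 z2 xs by blast
  moreover have iff2: "((\<Sum>b\<in>?L. (cmod (D xs b))^2) = 0) = (\<forall>b\<in>?L. (cmod (D xs b))^2 = 0)"
    by (rule sum_nonneg_eq_0_iff) simp_all
  ultimately have "(cmod (D xs ys))^2 = 0" using ys by blast
  then have "D xs ys = 0" by simp
  then show ?thesis by (simp add: D_def T1_def T2_def m_def Tm_def)
qed

lemma bitstrings_append: "a \<in> bitstrings m \<Longrightarrow> z \<in> bitstrings n \<Longrightarrow> a @ z \<in> bitstrings (m + n)"
  by (simp add: bitstrings_def)

lemma bitstrings_split:
  "bitstrings (m + n) = (\<lambda>(a, z). a @ z) ` (bitstrings m \<times> bitstrings n)"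
proof (rule set_eqI)
  fix x :: "bool list"
  show "x \<in> bitstrings (m + n) \<longleftrightarrow> x \<in> (\<lambda>(a, z). a @ z) ` (bitstrings m \<times> bitstrings n)"
  proof
    assume x: "x \<in> bitstrings (m + n)"
    then have "x = (\<lambda>(a, z). a @ z) (take m x, drop m x)" "(take m x, drop m x) \<in> bitstrings m \<times> bitstrings n"
      by (auto simp: bitstrings_def)
    then show "x \<in> (\<lambda>(a, z). a @ z) ` (bitstrings m \<times> bitstrings n)" by blast
  qed (auto simp: bitstrings_def)
qed

lemma inj_append_bs: "inj_on (\<lambda>(a, z). a @ z) (bitstrings m \<times> bitstrings n)"
  by (auto simp: inj_on_def bitstrings_def)

lemma sum_split:
  "(\<Sum>y\<in>bitstrings (m + n). g y) = (\<Sum>a\<in>bitstrings m. \<Sum>z\<in>bitstrings n. g (a @ z))"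
  unfolding bitstrings_split by (subst sum.reindex[OF inj_append_bs]) (simp add: sum.cartesian_product case_prod_beta)

definition liftop :: "nat \<Rightarrow> (bool list \<Rightarrow> bool list \<Rightarrow> complex) \<Rightarrow> bool list \<Rightarrow> bool list \<Rightarrow> complex" where
  "liftop m V x y = V (take m x) (take m y) * (if drop m x = drop m y then 1 else 0)"

lemma lift_apply:
  assumes a: "a \<in> bitstrings m" and z: "z \<in> bitstrings n"
  shows "apply_op (m + n) (liftop m V) \<Phi> (a @ z) = (\<Sum>a'\<in>bitstrings m. V a a' * \<Phi> (a' @ z))"
proof -
  have la: "length a = m" using a by (simp add: bitstrings_def)
  have "apply_op (m + n) (liftop m V) \<Phi> (a @ z) = (\<Sum>a'\<in>bitstrings m. \<Sum>z'\<in>bitstrings n. liftop m V (a @ z) (a' @ z') * \<Phi> (a' @ z'))"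
    using bitstrings_append[OF a z] by (simp add: apply_op_def sum_split)
  also have "\<dots> = (\<Sum>a'\<in>bitstrings m. \<Sum>z'\<in>bitstrings n. (if z' = z then V a a' * \<Phi> (a' @ z) else 0))"
    by (intro sum.cong refl) (auto simp: liftop_def la bitstrings_def)
  also have "\<dots> = (\<Sum>a'\<in>bitstrings m. V a a' * \<Phi> (a' @ z))"
    using z by (simp add: sum.delta)
  finally show ?thesis .
qed

lemma lift_unitary:
  assumes V: "charge_unitary m V"
  shows "charge_unitary (m + n) (liftop m V)"
proof -
  have Vc: "\<And>x y. x \<in> bitstrings m \<Longrightarrow> y \<in> bitstrings m \<Longrightarrow> hw x \<noteq> hw y \<Longrightarrow> V x y = 0"
    and Vo: "\<And>x x'. x \<in> bitstrings m \<Longrightarrow> x' \<in> bitstrings m \<Longrightarrow> (\<Sum>y\<in>bitstrings m. cnj (V y x) * V y x') = (if x = x' then 1 else 0)"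
    using V by (auto simp: charge_unitary_def)
  have tk: "take m x \<in> bitstrings m" "drop m x \<in> bitstrings n" "x = take m x @ drop m x"
    if "x \<in> bitstrings (m + n)" for x using that by (auto simp: bitstrings_def)
  have charge: "liftop m V x y = 0" if "x \<in> bitstrings (m + n)" "y \<in> bitstrings (m + n)" "hw x \<noteq> hw y" for x y
  proof (cases "drop m x = drop m y")
    case True
    have "hw x = hw (take m x) + hw (drop m x)" "hw y = hw (take m y) + hw (drop m y)"
      using tk(3)[OF that(1)] tk(3)[OF that(2)] hw_append by metis+
    then have "hw (take m x) \<noteq> hw (take m y)" using True that(3) by auto
    then show ?thesis using Vc tk that by (simp add: liftop_def)
  qed (simp add: liftop_def)
  have orth: "(\<Sum>y\<in>bitstrings (m + n). cnj (liftop m V y x) * liftop m V y x') = (if x = x' then 1 else 0)"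
    if x: "x \<in> bitstrings (m + n)" and x': "x' \<in> bitstrings (m + n)" for x x'
  proof -
    let ?tx = "take m x" and ?dx = "drop m x" and ?tx' = "take m x'" and ?dx' = "drop m x'"
    have "(\<Sum>y\<in>bitstrings (m + n). cnj (liftop m V y x) * liftop m V y x')
       = (\<Sum>a\<in>bitstrings m. \<Sum>z\<in>bitstrings n. cnj (liftop m V (a @ z) x) * liftop m V (a @ z) x')"
      by (rule sum_split)
    also have "\<dots> = (\<Sum>a\<in>bitstrings m. \<Sum>z\<in>bitstrings n. if z = ?dx then (if ?dx = ?dx' then cnj (V a ?tx) * V a ?tx' else 0) else 0)"
      by (intro sum.cong refl) (auto simp: liftop_def bitstrings_def)
    also have "\<dots> = (\<Sum>a\<in>bitstrings m. if ?dx = ?dx' then cnj (V a ?tx) * V a ?tx' else 0)"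
      using tk(2)[OF x] by (simp add: sum.delta)
    also have "\<dots> = (if ?dx = ?dx' then (if ?tx = ?tx' then 1 else 0) else 0)"
      using Vo[OF tk(1)[OF x] tk(1)[OF x']] by simp
    also have "\<dots> = (if x = x' then 1 else 0)"
      using tk(3)[OF x] tk(3)[OF x'] by (metis append_take_drop_id)
    finally show ?thesis .
  qed
  show ?thesis using charge orth by (simp add: charge_unitary_def)
qed

lemma ip_self: "ip n u u = complex_of_real (\<Sum>x\<in>bitstrings n. (cmod (u x))^2)"
  unfolding ip_def of_real_sum by (rule sum.cong) (simp, metis complex_norm_square of_real_power mult.commute)

lemma unitary_norm:
  assumes "charge_unitary n V"
  shows "(\<Sum>x\<in>bitstrings n. (cmod (apply_op n V u x))^2) = (\<Sum>x\<in>bitstrings n. (cmod (u x))^2)"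
  using unitary_ip[OF assms, of u u] by (simp only: ip_self of_real_eq_iff)

definition phiz :: "nat \<Rightarrow> bool list \<Rightarrow> (bool list \<Rightarrow> complex) \<Rightarrow> bool list \<Rightarrow> complex" where
  "phiz NA z \<Phi> = restrict (\<lambda>a. \<Phi> (a @ z) / complex_of_real (sqrt (outcome_prob NA \<Phi> z))) (bitstrings NA)"

lemma op_meas:
  assumes z: "z \<in> bitstrings NB"
  shows "(\<lambda>\<Phi>. outcome_prob NA \<Phi> z) \<in> borel_measurable (state_space (NA + NB))"
proof -
  have cm: "(\<lambda>\<Phi>. \<Phi> (a @ z)) \<in> borel_measurable (state_space (NA + NB))" if "a \<in> bitstrings NA" for a
    using comp_meas[OF bitstrings_append[OF that z]] .
  show ?thesis unfolding outcome_prob_def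
    by (intro borel_measurable_sum) (use cm in measurable)
qed

lemma phiz_meas:
  assumes z: "z \<in> bitstrings NB" and x: "x \<in> bitstrings NA"
  shows "(\<lambda>\<Phi>. phiz NA z \<Phi> x) \<in> borel_measurable (state_space (NA + NB))"
proof -
  have cm: "(\<lambda>\<Phi>. \<Phi> (x @ z)) \<in> borel_measurable (state_space (NA + NB))"
    using comp_meas[OF bitstrings_append[OF x z]] .
  have pm: "(\<lambda>\<Phi>. outcome_prob NA \<Phi> z) \<in> borel_measurable (state_space (NA + NB))" by (rule op_meas[OF z])
  have "(\<lambda>\<Phi>. \<Phi> (x @ z) / complex_of_real (sqrt (outcome_prob NA \<Phi> z))) \<in> borel_measurable (state_space (NA + NB))"
    using cm pm by measurable
  then show ?thesis using x by (simp add: phiz_def)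
qed

lemma sphere_comp:
  assumes "\<Phi> \<in> charge_sphere n Q"
  shows "\<And>x. x \<in> bitstrings n \<Longrightarrow> hw x \<noteq> Q \<Longrightarrow> \<Phi> x = 0" and "(\<Sum>x\<in>bitstrings n. (cmod (\<Phi> x))^2) = 1"
  using assms by (auto simp: charge_sphere_def)

lemma op_nonneg: "0 \<le> outcome_prob NA \<Phi> z"
  by (simp add: outcome_prob_def sum_nonneg)

lemma op_le1:
  assumes P: "\<Phi> \<in> charge_sphere (NA + NB) Q0" and z: "z \<in> bitstrings NB"
  shows "outcome_prob NA \<Phi> z \<le> 1"
proof -
  have "outcome_prob NA \<Phi> z \<le> (\<Sum>a\<in>bitstrings NA. \<Sum>z'\<in>bitstrings NB. (cmod (\<Phi> (a @ z')))^2)"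
    unfolding outcome_prob_def using z by (intro sum_mono member_le_sum) auto
  also have "\<dots> = (\<Sum>y\<in>bitstrings (NA + NB). (cmod (\<Phi> y))^2)" by (rule sum_split[symmetric])
  also have "\<dots> = 1" using sphere_comp(2)[OF P] .
  finally show ?thesis .
qed

lemma op_zero:
  assumes P: "\<Phi> \<in> charge_sphere (NA + NB) Q0" and z: "z \<in> bitstrings NB"
    and c: "\<not> (hw z \<le> Q0 \<and> Q0 - hw z \<le> NA)"
  shows "outcome_prob NA \<Phi> z = 0"
proof -
  have "\<Phi> (a @ z) = 0" if a: "a \<in> bitstrings NA" for a
  proof -
    have "hw a \<le> NA" using hw_le[OF a] .
    then have "hw (a @ z) \<noteq> Q0" using c by auto
    then show ?thesis using sphere_comp(1)[OF P bitstrings_append[OF a z]] by simp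
  qed
  then show ?thesis by (simp add: outcome_prob_def)
qed

lemma phiz_sphere:
  assumes P: "\<Phi> \<in> charge_sphere (NA + NB) Q0" and z: "z \<in> bitstrings NB"
    and p: "outcome_prob NA \<Phi> z \<noteq> 0"
  shows "phiz NA z \<Phi> \<in> charge_sphere NA (Q0 - hw z)"
proof -
  let ?p = "outcome_prob NA \<Phi> z"
  have hz: "hw z \<le> Q0" using op_zero[OF P z] p by blast
  have pp: "0 < ?p" using p op_nonneg[of NA \<Phi> z] by linarith
  have sp: "phiz NA z \<Phi> \<in> space (state_space NA)"
    by (simp add: phiz_def state_space_def space_PiM)
  have supp: "\<forall>x\<in>bitstrings NA. hw x \<noteq> Q0 - hw z \<longrightarrow> phiz NA z \<Phi> x = 0"
  proof (intro ballI impI)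
    fix x assume x: "x \<in> bitstrings NA" and h: "hw x \<noteq> Q0 - hw z"
    then have "hw (x @ z) \<noteq> Q0" using hz by auto
    then show "phiz NA z \<Phi> x = 0" using sphere_comp(1)[OF P bitstrings_append[OF x z]] x by (simp add: phiz_def)
  qed
  have "(\<Sum>x\<in>bitstrings NA. (cmod (phiz NA z \<Phi> x))^2) = (\<Sum>x\<in>bitstrings NA. (cmod (\<Phi> (x @ z)))^2 / ?p)"
    using pp by (intro sum.cong refl) (simp add: phiz_def norm_divide power_divide)
  also have "\<dots> = ?p / ?p" by (simp only: outcome_prob_def sum_divide_distrib)
  also have "\<dots> = 1" using pp by simp
  finally show ?thesis using sp supp by (simp add: charge_sphere_def)
qed

lemma lift_post:
  assumes z: "z \<in> bitstrings NB" and a: "a \<in> bitstrings NA"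
  shows "apply_op (NA + NB) (liftop NA V) \<Phi> (a @ z) = apply_op NA V (\<lambda>a'. \<Phi> (a' @ z)) a"
  using lift_apply[OF a z] a by (simp add: apply_op_eq)

lemma op_lift:
  assumes V: "charge_unitary NA V" and z: "z \<in> bitstrings NB"
  shows "outcome_prob NA (apply_op (NA + NB) (liftop NA V) \<Phi>) z = outcome_prob NA \<Phi> z"
proof -
  have "outcome_prob NA (apply_op (NA + NB) (liftop NA V) \<Phi>) z
      = (\<Sum>a\<in>bitstrings NA. (cmod (apply_op NA V (\<lambda>a'. \<Phi> (a' @ z)) a))^2)"
    unfolding outcome_prob_def using lift_post[OF z] by (intro sum.cong refl) simp
  also have "\<dots> = outcome_prob NA \<Phi> z" unfolding outcome_prob_def by (rule unitary_norm[OF V])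
  finally show ?thesis .
qed

lemma phiz_lift:
  assumes V: "charge_unitary NA V" and z: "z \<in> bitstrings NB" and a: "a \<in> bitstrings NA"
  shows "phiz NA z (apply_op (NA + NB) (liftop NA V) \<Phi>) a = apply_op NA V (phiz NA z \<Phi>) a"
proof -
  let ?s = "complex_of_real (sqrt (outcome_prob NA \<Phi> z))"
  have "phiz NA z (apply_op (NA + NB) (liftop NA V) \<Phi>) a = apply_op NA V (\<lambda>a'. \<Phi> (a' @ z)) a / ?s"
    using a by (simp add: phiz_def op_lift[OF V z] lift_post[OF z a])
  also have "\<dots> = (\<Sum>a'\<in>bitstrings NA. V a a' * (\<Phi> (a' @ z) / ?s))"
    using a by (simp add: apply_op_eq sum_divide_distrib)
  also have "\<dots> = apply_op NA V (phiz NA z \<Phi>) a"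
    using a by (simp add: apply_op_eq phiz_def)
  finally show ?thesis .
qed

lemma good_M:
  assumes M: "haar_sector (NA + NB) Q0 M" and z: "z \<in> bitstrings NB"
  shows "good NA (Q0 - hw z) k M (\<lambda>\<Phi>. outcome_prob NA \<Phi> z) (phiz NA z)"
proof -
  have s: "sets M = sets (state_space (NA + NB))" using M by (simp add: haar_sector_def)
  have P: "prob_space M" using M by (simp add: haar_sector_def)
  have aes: "AE \<Phi> in M. \<Phi> \<in> charge_sphere (NA + NB) Q0" using M by (simp add: haar_sector_def)
  have m1: "(\<lambda>\<Phi>. outcome_prob NA \<Phi> z) \<in> borel_measurable M"
    using op_meas[OF z] by (simp add: measurable_cong_sets[OF s refl])
  have m2: "\<forall>x\<in>bitstrings NA. (\<lambda>\<Phi>. phiz NA z \<Phi> x) \<in> borel_measurable M"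
    using phiz_meas[OF z] by (simp add: measurable_cong_sets[OF s refl])
  have b: "AE \<Phi> in M. \<bar>outcome_prob NA \<Phi> z\<bar> \<le> 1"
    using aes by eventually_elim (use op_le1 op_nonneg z in auto)
  have sph: "AE \<Phi> in M. outcome_prob NA \<Phi> z \<noteq> 0 \<longrightarrow> phiz NA z \<Phi> \<in> charge_sphere NA (Q0 - hw z)"
    using aes by eventually_elim (use phiz_sphere z in auto)
  have inv: "(\<integral>\<Phi>. outcome_prob NA \<Phi> z * (cmod (ip NA u (apply_op NA V (phiz NA z \<Phi>))))^(2*k) \<partial>M)
      = (\<integral>\<Phi>. outcome_prob NA \<Phi> z * (cmod (ip NA u (phiz NA z \<Phi>)))^(2*k) \<partial>M)"
    if V: "charge_unitary NA V" for V u
  proof -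
    let ?W = "liftop NA V"
    define f where "f \<Phi> = outcome_prob NA \<Phi> z * (cmod (ip NA u (phiz NA z \<Phi>)))^(2*k)" for \<Phi>
    have fm: "f \<in> borel_measurable (state_space (NA + NB))"
    proof -
      have "(\<lambda>\<Phi>. ip NA u (phiz NA z \<Phi>)) \<in> borel_measurable (state_space (NA + NB))"
        using phiz_meas[OF z] by (intro ip_meas) auto
      then show ?thesis unfolding f_def using op_meas[OF z] by measurable
    qed
    have pw: "f (apply_op (NA + NB) ?W \<Phi>) = outcome_prob NA \<Phi> z * (cmod (ip NA u (apply_op NA V (phiz NA z \<Phi>))))^(2*k)" for \<Phi>
    proof -
      have "ip NA u (phiz NA z (apply_op (NA + NB) ?W \<Phi>)) = ip NA u (apply_op NA V (phiz NA z \<Phi>))"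
        unfolding ip_def by (intro sum.cong refl) (simp add: phiz_lift[OF V z])
      then show ?thesis by (simp add: f_def op_lift[OF V z])
    qed
    have "(\<integral>\<Phi>. f (apply_op (NA + NB) ?W \<Phi>) \<partial>M) = (\<integral>\<Phi>. f \<Phi> \<partial>M)"
      by (rule haar_inv[OF M lift_unitary[OF V] fm])
    moreover have "(\<integral>\<Phi>. f (apply_op (NA + NB) ?W \<Phi>) \<partial>M)
       = (\<integral>\<Phi>. outcome_prob NA \<Phi> z * (cmod (ip NA u (apply_op NA V (phiz NA z \<Phi>))))^(2*k) \<partial>M)"
      by (rule Bochner_Integration.integral_cong[OF refl pw])
    ultimately show ?thesis by (simp only: f_def)
  qed
  show ?thesis using P m1 m2 b sph inv by (simp add: good_def)
qed

lemma basis_sphere: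
  assumes x: "x \<in> bitstrings n" and h: "hw x = Q"
  shows "restrict (\<lambda>w. if w = x then 1 else 0) (bitstrings n) \<in> charge_sphere n Q"
proof -
  have "(\<Sum>w\<in>bitstrings n. (cmod (restrict (\<lambda>w. if w = x then (1::complex) else 0) (bitstrings n) w))^2)
      = (\<Sum>w\<in>bitstrings n. if w = x then 1 else 0)"
    by (intro sum.cong refl) auto
  also have "\<dots> = 1" using x by simp
  finally show ?thesis using h by (auto simp: charge_sphere_def state_space_def space_PiM)
qed

lemma ip_basis:
  assumes x: "x \<in> bitstrings n"
  shows "ip n (restrict (\<lambda>w. if w = x then 1 else 0) (bitstrings n)) \<Psi> = \<Psi> x"
proof -
  have "ip n (restrict (\<lambda>w. if w = x then 1 else 0) (bitstrings n)) \<Psi> = (\<Sum>w\<in>bitstrings n. if w = x then \<Psi> w else 0)"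
    unfolding ip_def by (intro sum.cong refl) auto
  then show ?thesis using x by simp
qed

lemma entry_equal:
  assumes M: "haar_sector n Q M" and x: "x \<in> bitstrings n" and y: "y \<in> bitstrings n"
    and hx: "hw x = Q" and hy: "hw y = Q"
  shows "(\<integral>\<Phi>. (cmod (\<Phi> x))^2 \<partial>M) = (\<integral>\<Phi>. (cmod (\<Phi> y))^2 \<partial>M)"
proof -
  define ex where "ex = restrict (\<lambda>w. if w = x then (1::complex) else 0) (bitstrings n)"
  define ey where "ey = restrict (\<lambda>w. if w = y then (1::complex) else 0) (bitstrings n)"
  obtain V where V: "charge_unitary n V" "\<forall>w\<in>bitstrings n. apply_op n V ex w = ey w"
    using householder[OF basis_sphere[OF x hx] basis_sphere[OF y hy]] unfolding ex_def ey_def by blast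
  have e: "ip n ey (apply_op n V \<Psi>) = \<Psi> x" for \<Psi>
  proof -
    have "ip n ey (apply_op n V \<Psi>) = ip n (apply_op n V ex) (apply_op n V \<Psi>)"
      unfolding ip_def by (intro sum.cong refl) (simp add: V(2))
    also have "\<dots> = ip n ex \<Psi>" by (rule unitary_ip[OF V(1)])
    also have "\<dots> = \<Psi> x" unfolding ex_def by (rule ip_basis[OF x])
    finally show ?thesis .
  qed
  have f: "(\<lambda>\<Phi>. (cmod (ip n ey \<Phi>))^2) \<in> borel_measurable (state_space n)"
  proof -
    have "(\<lambda>\<Phi>. ip n ey \<Phi>) \<in> borel_measurable (state_space n)"
      using ip_meas[of n "\<lambda>\<phi>. \<phi>"] comp_meas by auto
    then show ?thesis by measurable
  qed
  have "(\<integral>\<Phi>. (cmod (ip n ey (apply_op n V \<Phi>)))^2 \<partial>M) = (\<integral>\<Phi>. (cmod (ip n ey \<Phi>))^2 \<partial>M)"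
    by (rule haar_inv[OF M V(1) f])
  then have "(\<integral>\<Phi>. (cmod (\<Phi> x))^2 \<partial>M) = (\<integral>\<Phi>. (cmod (ip n ey \<Phi>))^2 \<partial>M)" by (simp only: e)
  moreover have "\<And>\<Phi>. ip n ey \<Phi> = \<Phi> y" unfolding ey_def by (rule ip_basis[OF y])
  ultimately show ?thesis by (simp only:)
qed

lemma entry_meas:
  assumes M: "haar_sector n Q M" and x: "x \<in> bitstrings n"
  shows "(\<lambda>\<Phi>. (cmod (\<Phi> x))^2) \<in> borel_measurable M"
proof -
  have s: "sets M = sets (state_space n)" using M by (simp add: haar_sector_def)
  have "(\<lambda>\<Phi>. \<Phi> x) \<in> borel_measurable M" using comp_meas[OF x] by (simp add: measurable_cong_sets[OF s refl])
  then show ?thesis by measurable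
qed

lemma entry_int:
  assumes M: "haar_sector n Q M" and x: "x \<in> bitstrings n"
  shows "integrable M (\<lambda>\<Phi>. (cmod (\<Phi> x))^2)"
proof -
  interpret prob_space M using M by (simp add: haar_sector_def)
  have aes: "AE \<Phi> in M. \<Phi> \<in> charge_sphere n Q" using M by (simp add: haar_sector_def)
  show ?thesis
  proof (rule integrable_const_bound[where B=1])
    show "AE \<Phi> in M. norm ((cmod (\<Phi> x))^2) \<le> 1"
      using aes
    proof eventually_elim
      case (elim \<Phi>)
      have "cmod (\<Phi> x) \<le> 1" using sphere_bound[OF elim x] .
      then show ?case by (simp add: power_le_one)
    qed
  qed (rule entry_meas[OF M x])
qed

lemma entry_zero:
  assumes M: "haar_sector n Q M" and x: "x \<in> bitstrings n" and h: "hw x \<noteq> Q"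
  shows "(\<integral>\<Phi>. (cmod (\<Phi> x))^2 \<partial>M) = 0"
proof -
  have aes: "AE \<Phi> in M. \<Phi> \<in> charge_sphere n Q" using M by (simp add: haar_sector_def)
  have "(\<integral>\<Phi>. (cmod (\<Phi> x))^2 \<partial>M) = (\<integral>\<Phi>. 0 \<partial>M)"
  proof (rule integral_cong_AE)
    show "AE \<Phi> in M. (cmod (\<Phi> x))^2 = 0"
      using aes by eventually_elim (use sphere_comp(1) x h in auto)
  qed (simp_all add: entry_meas[OF M x])
  then show ?thesis by simp
qed

lemma entry_val:
  assumes M: "haar_sector n Q M" and x: "x \<in> bitstrings n" and hx: "hw x = Q"
  shows "(\<integral>\<Phi>. (cmod (\<Phi> x))^2 \<partial>M) = 1 / real (n choose Q)"
proof -
  interpret prob_space M using M by (simp add: haar_sector_def)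
  have aes: "AE \<Phi> in M. \<Phi> \<in> charge_sphere n Q" using M by (simp add: haar_sector_def)
  let ?e = "(\<integral>\<Phi>. (cmod (\<Phi> x))^2 \<partial>M)"
  let ?S = "{y \<in> bitstrings n. hw y = Q}"
  have "(\<Sum>y\<in>bitstrings n. \<integral>\<Phi>. (cmod (\<Phi> y))^2 \<partial>M) = (\<integral>\<Phi>. (\<Sum>y\<in>bitstrings n. (cmod (\<Phi> y))^2) \<partial>M)"
    by (rule Bochner_Integration.integral_sum[symmetric]) (rule entry_int[OF M])
  also have "\<dots> = (\<integral>\<Phi>. 1 \<partial>M)"
  proof (rule integral_cong_AE)
    show "AE \<Phi> in M. (\<Sum>y\<in>bitstrings n. (cmod (\<Phi> y))^2) = 1"
      using aes by eventually_elim (use sphere_comp(2) in auto)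
    show "(\<lambda>\<Phi>. \<Sum>y\<in>bitstrings n. (cmod (\<Phi> y))^2) \<in> borel_measurable M"
      using entry_meas[OF M] by (intro borel_measurable_sum) auto
  qed simp
  also have "\<dots> = 1" by (simp add: prob_space)
  finally have s1: "(\<Sum>y\<in>bitstrings n. \<integral>\<Phi>. (cmod (\<Phi> y))^2 \<partial>M) = 1" .
  have "(\<Sum>y\<in>bitstrings n. \<integral>\<Phi>. (cmod (\<Phi> y))^2 \<partial>M) = (\<Sum>y\<in>?S. \<integral>\<Phi>. (cmod (\<Phi> y))^2 \<partial>M)"
    by (rule sum.mono_neutral_right) (auto simp: entry_zero[OF M])
  also have "\<dots> = (\<Sum>y\<in>?S. ?e)"
    using entry_equal[OF M x _ hx] by (intro sum.cong refl) auto
  also have "\<dots> = real (n choose Q) * ?e" by (simp add: card_hw)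
  finally have ce: "real (n choose Q) * ?e = 1" using s1 by simp
  have nz: "real (n choose Q) \<noteq> 0"
  proof
    assume "real (n choose Q) = 0"
    then show False using ce by (metis mult_zero_left zero_neq_one)
  qed
  show ?thesis using ce nz by (simp add: eq_divide_eq mult.commute)
qed

lemma Ep:
  assumes M: "haar_sector (NA + NB) Q0 M" and z: "z \<in> bitstrings NB"
  shows "(\<integral>\<Phi>. outcome_prob NA \<Phi> z \<partial>M)
     = (if hw z \<le> Q0 then real (NA choose (Q0 - hw z)) / real ((NA + NB) choose Q0) else 0)"
proof -
  let ?C = "real ((NA + NB) choose Q0)"
  have "(\<integral>\<Phi>. outcome_prob NA \<Phi> z \<partial>M) = (\<Sum>a\<in>bitstrings NA. \<integral>\<Phi>. (cmod (\<Phi> (a @ z)))^2 \<partial>M)"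
    unfolding outcome_prob_def
    by (rule Bochner_Integration.integral_sum) (rule entry_int[OF M bitstrings_append[OF _ z]])
  also have "\<dots> = (\<Sum>a\<in>bitstrings NA. if hw a + hw z = Q0 then 1 / ?C else 0)"
    by (intro sum.cong refl) (auto simp: entry_val[OF M] entry_zero[OF M] bitstrings_append[OF _ z])
  also have "\<dots> = real (card {a \<in> bitstrings NA. hw a + hw z = Q0}) * (1 / ?C)"
    by (simp add: sum.If_cases Int_def)
  also have "\<dots> = (if hw z \<le> Q0 then real (NA choose (Q0 - hw z)) / ?C else 0)"
  proof (cases "hw z \<le> Q0")
    case True
    then have "{a \<in> bitstrings NA. hw a + hw z = Q0} = {a \<in> bitstrings NA. hw a = Q0 - hw z}" by auto
    then show ?thesis using True by (simp add: card_hw)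
  next
    case False
    then have "{a \<in> bitstrings NA. hw a + hw z = Q0} = {}" by auto
    then show ?thesis using False by simp
  qed
  finally show ?thesis .
qed

lemma tp_phiz:
  assumes xs: "xs \<in> lists_k k (bitstrings NA)" and ys: "ys \<in> lists_k k (bitstrings NA)"
  shows "tensor_proj k (phiz NA z \<Phi>) xs ys = tensor_proj k (post_state \<Phi> z) xs ys / (complex_of_real (outcome_prob NA \<Phi> z))^k"
proof -
  let ?p = "outcome_prob NA \<Phi> z"
  let ?s = "complex_of_real (sqrt ?p)"
  have ss: "?s * ?s = complex_of_real ?p"
    using op_nonneg[of NA \<Phi> z] by (simp flip: of_real_mult)
  have "tensor_proj k (phiz NA z \<Phi>) xs ys = (\<Prod>i<k. (\<Phi> (xs ! i @ z) * cnj (\<Phi> (ys ! i @ z))) / complex_of_real ?p)"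
    unfolding tensor_proj_def
  proof (intro prod.cong refl)
    fix i assume "i \<in> {..<k}"
    then have "xs ! i \<in> bitstrings NA" "ys ! i \<in> bitstrings NA" using xs ys by (auto simp: lists_k_def nth_in)
    then show "phiz NA z \<Phi> (xs ! i) * cnj (phiz NA z \<Phi> (ys ! i)) = \<Phi> (xs ! i @ z) * cnj (\<Phi> (ys ! i @ z)) / complex_of_real ?p"
      by (simp add: phiz_def ss[symmetric])
  qed
  also have "\<dots> = tensor_proj k (post_state \<Phi> z) xs ys / (complex_of_real ?p)^k"
    by (simp add: prod_dividef tensor_proj_def post_state_def)
  finally show ?thesis .
qed

lemma meas_sum_eq:
  assumes k: "k \<ge> 1" and xs: "xs \<in> lists_k k (bitstrings NA)" and ys: "ys \<in> lists_k k (bitstrings NA)"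
  shows "meas_sum NA NB k \<Phi> xs ys
     = (\<Sum>z\<in>bitstrings NB. complex_of_real (outcome_prob NA \<Phi> z) * tensor_proj k (phiz NA z \<Phi>) xs ys)"
proof -
  have "meas_sum NA NB k \<Phi> xs ys = (\<Sum>z\<in>bitstrings NB. if outcome_prob NA \<Phi> z \<noteq> 0 then
        tensor_proj k (post_state \<Phi> z) xs ys / (complex_of_real (outcome_prob NA \<Phi> z)) ^ (k - 1) else 0)"
    unfolding meas_sum_def by (rule sum.inter_filter) simp
  also have "\<dots> = (\<Sum>z\<in>bitstrings NB. complex_of_real (outcome_prob NA \<Phi> z) * tensor_proj k (phiz NA z \<Phi>) xs ys)"
  proof (intro sum.cong refl)
    fix z
    let ?p = "complex_of_real (outcome_prob NA \<Phi> z)"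
    show "(if outcome_prob NA \<Phi> z \<noteq> 0 then tensor_proj k (post_state \<Phi> z) xs ys / ?p ^ (k - 1) else 0)
        = ?p * tensor_proj k (phiz NA z \<Phi>) xs ys"
    proof (cases "outcome_prob NA \<Phi> z = 0")
      case False
      then have pz: "?p \<noteq> 0" by simp
      have "?p ^ k = ?p * ?p ^ (k - 1)" using k by (cases k) auto
      then show ?thesis using False pz by (simp add: tp_phiz[OF xs ys])
    qed simp
  qed
  finally show ?thesis .
qed

lemma sum_by_hw:
  fixes g :: "nat \<Rightarrow> complex"
  shows "(\<Sum>z\<in>bitstrings n. g (hw z)) = (\<Sum>q\<le>n. of_nat (n choose q) * g q)"
proof -
  have "(\<Sum>z\<in>bitstrings n. g (hw z)) = (\<Sum>q\<le>n. \<Sum>z\<in>{z \<in> bitstrings n. hw z = q}. g (hw z))"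
    by (rule sum.group[symmetric]) (auto simp: hw_le)
  also have "\<dots> = (\<Sum>q\<le>n. \<Sum>z\<in>{z \<in> bitstrings n. hw z = q}. g q)"
    by (intro sum.cong refl) auto
  also have "\<dots> = (\<Sum>q\<le>n. of_nat (n choose q) * g q)"
    by (simp add: card_hw)
  finally show ?thesis .
qed

lemma comb_reindex:
  fixes H :: "nat \<Rightarrow> complex"
  shows "(\<Sum>q\<le>NB. of_nat (NB choose q) * (complex_of_real (if q \<le> Q0 then real (NA choose (Q0 - q)) / C else 0) * H (Q0 - q)))
       = (\<Sum>i\<le>NA. complex_of_real (if i \<le> Q0 then real (NA choose i) * real (NB choose (Q0 - i)) / C else 0) * H i)"
proof -
  define t where "t i = complex_of_real (real (NA choose i) * real (NB choose (Q0 - i)) / C) * H i" for i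
  have a: "(\<Sum>q\<le>NB. of_nat (NB choose q) * (complex_of_real (if q \<le> Q0 then real (NA choose (Q0 - q)) / C else 0) * H (Q0 - q)))
     = (\<Sum>q\<in>{q \<in> {..NB}. q \<le> Q0}. t (Q0 - q))"
  proof -
    have "(\<Sum>q\<le>NB. of_nat (NB choose q) * (complex_of_real (if q \<le> Q0 then real (NA choose (Q0 - q)) / C else 0) * H (Q0 - q)))
      = (\<Sum>q\<le>NB. if q \<le> Q0 then t (Q0 - q) else 0)"
    proof (intro sum.cong refl)
      fix q
      show "of_nat (NB choose q) * (complex_of_real (if q \<le> Q0 then real (NA choose (Q0 - q)) / C else 0) * H (Q0 - q))
          = (if q \<le> Q0 then t (Q0 - q) else 0)"
        by (cases "q \<le> Q0") (simp_all add: t_def)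
    qed
    also have "\<dots> = (\<Sum>q\<in>{q \<in> {..NB}. q \<le> Q0}. t (Q0 - q))"
      by (rule sum.inter_filter[symmetric]) simp
    finally show ?thesis .
  qed
  have b: "(\<Sum>q\<le>Q0. t (Q0 - q)) = (\<Sum>q\<in>{q \<in> {..Q0}. q \<le> NB}. t (Q0 - q))"
    by (rule sum.mono_neutral_right) (auto simp: t_def)
  have c: "(\<Sum>q\<le>Q0. t (Q0 - q)) = (\<Sum>i\<le>Q0. t i)"
    by (rule sum.reindex_bij_witness[where i="\<lambda>x. Q0 - x" and j="\<lambda>x. Q0 - x"]) auto
  have d: "(\<Sum>i\<le>Q0. t i) = (\<Sum>i\<in>{i \<in> {..Q0}. i \<le> NA}. t i)"
    by (rule sum.mono_neutral_right) (auto simp: t_def)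
  have e: "(\<Sum>i\<le>NA. complex_of_real (if i \<le> Q0 then real (NA choose i) * real (NB choose (Q0 - i)) / C else 0) * H i)
     = (\<Sum>i\<in>{i \<in> {..NA}. i \<le> Q0}. t i)"
  proof -
    have "(\<Sum>i\<le>NA. complex_of_real (if i \<le> Q0 then real (NA choose i) * real (NB choose (Q0 - i)) / C else 0) * H i)
       = (\<Sum>i\<le>NA. if i \<le> Q0 then t i else 0)"
      by (intro sum.cong refl) (simp add: t_def)
    also have "\<dots> = (\<Sum>i\<in>{i \<in> {..NA}. i \<le> Q0}. t i)"
      by (rule sum.inter_filter[symmetric]) simp
    finally show ?thesis .
  qed
  have s1: "{q \<in> {..NB}. q \<le> Q0} = {q \<in> {..Q0}. q \<le> NB}" by auto
  have s2: "{i \<in> {..NA}. i \<le> Q0} = {i \<in> {..Q0}. i \<le> NA}" by auto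
  show ?thesis using a b c d e s1 s2 by simp
qed

lemma per_z:
  assumes M: "haar_sector (NA + NB) Q0 M" and MA: "\<forall>QA\<le>NA. haar_sector NA QA (MA QA)"
    and z: "z \<in> bitstrings NB"
    and xs: "xs \<in> lists_k k (bitstrings NA)" and ys: "ys \<in> lists_k k (bitstrings NA)"
  shows "integrable M (\<lambda>\<Phi>. complex_of_real (outcome_prob NA \<Phi> z) * tensor_proj k (phiz NA z \<Phi>) xs ys)"
    and "(\<integral>\<Phi>. complex_of_real (outcome_prob NA \<Phi> z) * tensor_proj k (phiz NA z \<Phi>) xs ys \<partial>M)
        = complex_of_real (\<integral>\<Phi>. outcome_prob NA \<Phi> z \<partial>M) * haar_moment k (MA (Q0 - hw z)) xs ys"
proof -
  have g: "good NA (Q0 - hw z) k M (\<lambda>\<Phi>. outcome_prob NA \<Phi> z) (phiz NA z)" by (rule good_M[OF M z])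
  show "integrable M (\<lambda>\<Phi>. complex_of_real (outcome_prob NA \<Phi> z) * tensor_proj k (phiz NA z \<Phi>) xs ys)"
    using good_int[OF g xs ys] .
  show "(\<integral>\<Phi>. complex_of_real (outcome_prob NA \<Phi> z) * tensor_proj k (phiz NA z \<Phi>) xs ys \<partial>M)
        = complex_of_real (\<integral>\<Phi>. outcome_prob NA \<Phi> z \<partial>M) * haar_moment k (MA (Q0 - hw z)) xs ys"
  proof (cases "hw z \<le> Q0 \<and> Q0 - hw z \<le> NA")
    case True
    then have h: "haar_sector NA (Q0 - hw z) (MA (Q0 - hw z))" using MA by auto
    show ?thesis using transfer[OF g h xs ys] by (simp add: Tm_def haar_moment_def)
  next
    case False
    have aes: "AE \<Phi> in M. \<Phi> \<in> charge_sphere (NA + NB) Q0" using M by (simp add: haar_sector_def)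
    have s: "sets M = sets (state_space (NA + NB))" using M by (simp add: haar_sector_def)
    have pm: "(\<lambda>\<Phi>. outcome_prob NA \<Phi> z) \<in> borel_measurable M"
      using op_meas[OF z] by (simp add: measurable_cong_sets[OF s refl])
    have z1: "(\<integral>\<Phi>. outcome_prob NA \<Phi> z \<partial>M) = (\<integral>\<Phi>. 0 \<partial>M)"
    proof (rule integral_cong_AE)
      show "AE \<Phi> in M. outcome_prob NA \<Phi> z = 0"
        using aes by eventually_elim (use op_zero[OF _ z False] in auto)
    qed (simp_all add: pm)
    have z2: "(\<integral>\<Phi>. complex_of_real (outcome_prob NA \<Phi> z) * tensor_proj k (phiz NA z \<Phi>) xs ys \<partial>M) = (\<integral>\<Phi>. 0 \<partial>M)"
    proof (rule integral_cong_AE)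
      show "AE \<Phi> in M. complex_of_real (outcome_prob NA \<Phi> z) * tensor_proj k (phiz NA z \<Phi>) xs ys = 0"
        using aes by eventually_elim (use op_zero[OF _ z False] in auto)
      show "(\<lambda>\<Phi>. complex_of_real (outcome_prob NA \<Phi> z) * tensor_proj k (phiz NA z \<Phi>) xs ys) \<in> borel_measurable M"
        using good_int[OF g xs ys] by (rule borel_measurable_integrable)
    qed simp
    show ?thesis using z1 z2 by simp
  qed
qed

theorem mainTheorem2:
  fixes NA NB Q0 k :: nat
    and M :: "(bool list \<Rightarrow> complex) measure"
    and MA :: "nat \<Rightarrow> (bool list \<Rightarrow> complex) measure"
  assumes "Q0 \<le> NA + NB" and "k \<ge> 1"
    and "haar_sector (NA + NB) Q0 M"
    and "\<forall>QA\<le>NA. haar_sector NA QA (MA QA)"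
  shows "(\<forall>xs ys. length xs = k \<and> length ys = k \<and> set xs \<subseteq> bitstrings NA \<and> set ys \<subseteq> bitstrings NA \<longrightarrow>
            (LINT \<Phi>|M. meas_sum NA NB k \<Phi> xs ys)
              = (\<Sum>QA\<le>NA. complex_of_real (cond_pi NA NB Q0 QA) * haar_moment k (MA QA) xs ys))
       \<and> (\<forall>z\<in>bitstrings NB.
            (LINT \<Phi>|M. outcome_prob NA \<Phi> z)
              = (if hw z \<le> Q0 then real (NA choose (Q0 - hw z)) / real ((NA + NB) choose Q0) else 0))"
proof (intro conjI allI impI ballI)
  note M = assms(3) and MA = assms(4)
  fix z assume z: "z \<in> bitstrings NB"
  show "(LINT \<Phi>|M. outcome_prob NA \<Phi> z)
      = (if hw z \<le> Q0 then real (NA choose (Q0 - hw z)) / real ((NA + NB) choose Q0) else 0)"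
    by (rule Ep[OF M z])
next
  note M = assms(3) and MA = assms(4)
  fix xs ys :: "bool list list"
  assume a: "length xs = k \<and> length ys = k \<and> set xs \<subseteq> bitstrings NA \<and> set ys \<subseteq> bitstrings NA"
  then have xs: "xs \<in> lists_k k (bitstrings NA)" and ys: "ys \<in> lists_k k (bitstrings NA)"
    by (auto simp: lists_k_def)
  let ?C = "real ((NA + NB) choose Q0)"
  let ?H = "\<lambda>i. haar_moment k (MA i) xs ys"
  have "(LINT \<Phi>|M. meas_sum NA NB k \<Phi> xs ys)
      = (CLINT \<Phi>|M. (\<Sum>z\<in>bitstrings NB. complex_of_real (outcome_prob NA \<Phi> z) * tensor_proj k (phiz NA z \<Phi>) xs ys))"
    by (rule Bochner_Integration.integral_cong[OF refl]) (rule meas_sum_eq[OF assms(2) xs ys])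
  also have "\<dots> = (\<Sum>z\<in>bitstrings NB. CLINT \<Phi>|M. complex_of_real (outcome_prob NA \<Phi> z) * tensor_proj k (phiz NA z \<Phi>) xs ys)"
    by (rule Bochner_Integration.integral_sum) (rule per_z(1)[OF M MA _ xs ys])
  also have "\<dots> = (\<Sum>z\<in>bitstrings NB. complex_of_real (if hw z \<le> Q0 then real (NA choose (Q0 - hw z)) / ?C else 0) * ?H (Q0 - hw z))"
    by (intro sum.cong refl) (simp add: per_z(2)[OF M MA _ xs ys] Ep[OF M])
  also have "\<dots> = (\<Sum>q\<le>NB. of_nat (NB choose q) * (complex_of_real (if q \<le> Q0 then real (NA choose (Q0 - q)) / ?C else 0) * ?H (Q0 - q)))"
    by (rule sum_by_hw)
  also have "\<dots> = (\<Sum>i\<le>NA. complex_of_real (if i \<le> Q0 then real (NA choose i) * real (NB choose (Q0 - i)) / ?C else 0) * ?H i)"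
    by (rule comb_reindex)
  also have "\<dots> = (\<Sum>QA\<le>NA. complex_of_real (cond_pi NA NB Q0 QA) * haar_moment k (MA QA) xs ys)"
    by (simp add: cond_pi_def)
  finally show "(LINT \<Phi>|M. meas_sum NA NB k \<Phi> xs ys)
      = (\<Sum>QA\<le>NA. complex_of_real (cond_pi NA NB Q0 QA) * haar_moment k (MA QA) xs ys)" .
qed

end
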